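(* Let $n\geq1$ and $k\in\{1,\ldots,n\}$, and let $\eta_k\in\Omega$ be the sequence constructed below. Then $v_{n,\eta_k}=(0,k)$ or $v_{n,\eta_k}=(n-k+1,0)$.
   Context: $\Omega$ is the set of sequences $\eta=(z,d_0,\ldots,d_r)$ with $z\in\{0,1\}$, $d_0=0$, $d_i\geq1$ ($1\leq i\leq r$), $\sum d_i=n$. For $j\in\{1,\ldots,n\}$ let $t$ be unique with $\sum_{i=0}^{t-1}d_i<j\leq\sum_{i=0}^td_i$, $c=j-\sum_{i=0}^{t-1}d_i$; $v_{j,\eta}=(\sum_{i\text{ odd},i<t}d_i+c,0)$ if $z=1,t$ odd; $(0,\sum_{i\text{ even},i<t}d_i+c)$ if $z=1,t$ even; $(0,\sum_{i\text{ odd},i<t}d_i+c)$ if $z=0,t$ odd; $(\sum_{i\text{ even},i<t}d_i+c,0)$ if $z=0,t$ even. Construction of $\eta_k$: let $f_k(v)=kv_1+(1-k)v_2$ for $v\in\mathbb N^2$ (so $f_k((1,0))=k$, $f_k((n,n+1))=n+1-k$). Put $z_k=1$ if $k\leq n+1-k$ and $z_k=0$ otherwise, and $d_{k,0}=0$. Iteratively for $l\geq1$, with $O_l=\sum_{j\text{ odd},1\leq j\leq l-1}d_{k,j}$ and $E_l=\sum_{j\text{ even},0\leq j\leq l-1}d_{k,j}$, define $t_l=\max\{m\in\mathbb N: mk\leq(E_l+1)(n+1-k)\}$ if $z_k=1,l$ odd; $t_l=\max\{m: m(n+1-k)\leq(O_l+1)k\}$ if $z_k=1,l$ even; $t_l=\max\{m:m(n+1-k)\leq(E_l+1)k\}$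 if $z_k=0,l$ odd; $t_l=\max\{m:mk\leq(O_l+1)(n+1-k)\}$ if $z_k=0,l$ even; $s_1=0$, $s_l=O_l$ for odd $l>1$, $s_l=E_l$ for even $l$; and $d_{k,l}=\min\{n-\sum_{j=0}^{l-1}d_{k,j},\,t_l-s_l\}$. The process stops at the first $r$ with $\sum_{j=1}^rd_{k,j}=n$, and $\eta_k=(z_k,d_{k,0},\ldots,d_{k,r})$ (it lies in $\Omega$). *)

theory Defs
  imports Main
begin

text \<open>A sequence eta = (z, d_0, ..., d_r) is represented as a pair (z, ds) with
  z :: nat (in {0,1}) and ds = [d_0, ..., d_r] :: nat list.\<close>

definition Omega :: "nat \<Rightarrow> (nat \<times> nat list) set" where
  "Omega n = {(z, ds). z \<in> {0,1} \<and> ds \<noteq> [] \<and> ds ! 0 = 0 \<and>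
      (\<forall>i. 1 \<le> i \<and> i < length ds \<longrightarrow> ds ! i \<ge> 1) \<and> sum_list ds = n}"

definition psum :: "nat list \<Rightarrow> nat \<Rightarrow> nat" where
  "psum ds t = (\<Sum>i<t. ds ! i)"

definition odd_sum :: "nat list \<Rightarrow> nat \<Rightarrow> nat" where
  "odd_sum ds t = (\<Sum>i\<in>{i. i < t \<and> odd i}. ds ! i)"

definition even_sum :: "nat list \<Rightarrow> nat \<Rightarrow> nat" where
  "even_sum ds t = (\<Sum>i\<in>{i. i < t \<and> even i}. ds ! i)"

definition vvec :: "nat \<Rightarrow> nat \<times> nat list \<Rightarrow> nat \<times> nat" where
  "vvec j eta = (case eta of (z, ds) \<Rightarrow>
     (let t = (THE t. t < length ds \<and> psum ds t < j \<and> j \<le> psum ds (Suc t));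
          c = j - psum ds t
      in if z = 1 then
           (if odd t then (odd_sum ds t + c, 0) else (0, even_sum ds t + c))
         else
           (if odd t then (0, odd_sum ds t + c) else (even_sum ds t + c, 0))))"

text \<open>Construction of eta_k. The values are computed in the integers, exactly as
  written (min of n - partial sum and t_l - s_l).\<close>

definition z_k :: "nat \<Rightarrow> nat \<Rightarrow> nat" where
  "z_k n k = (if k \<le> n + 1 - k then 1 else 0)"

text \<open>Given prev = [d_{k,0}, ..., d_{k,l-1}] (length l \<ge> 1), compute d_{k,l}.\<close>
definition next_d :: "nat \<Rightarrow> nat \<Rightarrow> int list \<Rightarrow> int" where
  "next_d n k prev = (
     let l = length prev;
         Ol = (\<Sum>j\<in>{j. 1 \<le> j \<and> j \<le> l - 1 \<and> odd j}. prev ! j);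
         Ev = (\<Sum>j\<in>{j. j \<le> l - 1 \<and> even j}. prev ! j);
         a = int k; b = int n + 1 - int k;
         t = (if z_k n k = 1 then
                (if odd l then int (GREATEST m::nat. int m * a \<le> (Ev + 1) * b)
                 else int (GREATEST m::nat. int m * b \<le> (Ol + 1) * a))
              else
                (if odd l then int (GREATEST m::nat. int m * b \<le> (Ev + 1) * a)
                 else int (GREATEST m::nat. int m * a \<le> (Ol + 1) * b)));
         s = (if l = 1 then 0 else if odd l then Ol else Ev)
     in min (int n - sum_list prev) (t - s))"

fun dseq :: "nat \<Rightarrow> nat \<Rightarrow> nat \<Rightarrow> int list" where
  "dseq n k 0 = [0]"
| "dseq n k (Suc l) = dseq n k l @ [next_d n k (dseq n k l)]"

definition d_k :: "nat \<Rightarrow> nat \<Rightarrow> nat \<Rightarrow> int" where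
  "d_k n k l = dseq n k l ! l"

definition r_k :: "nat \<Rightarrow> nat \<Rightarrow> nat" where
  "r_k n k = (LEAST r. (\<Sum>j=1..r. d_k n k j) = int n)"

definition eta_k :: "nat \<Rightarrow> nat \<Rightarrow> nat \<times> nat list" where
  "eta_k n k = (z_k n k, map nat (dseq n k (r_k n k)))"

end

theory Submission
  imports Defs
begin

lemma dseq_len: "length (dseq n k l) = Suc l"
  by (induction l) auto

lemma dseq_eq: "dseq n k l = map (d_k n k) [0..<Suc l]"
proof (induction l)
  case 0 then show ?case by (simp add: d_k_def)
next
  case (Suc l)
  have "d_k n k (Suc l) = next_d n k (dseq n k l)"
    by (simp add: d_k_def nth_append dseq_len)
  then show ?case using Suc by simp
qed

lemma d0: "d_k n k 0 = 0" by (simp add: d_k_def)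

lemma d_Suc: "d_k n k (Suc l) = next_d n k (map (d_k n k) [0..<Suc l])"
proof -
  have "d_k n k (Suc l) = next_d n k (dseq n k l)"
    by (simp add: d_k_def nth_append dseq_len)
  then show ?thesis by (simp only: dseq_eq)
qed

lemma greatest_div:
  fixes x y :: int
  assumes "0 < x" "0 \<le> y"
  shows "int (GREATEST m::nat. int m * x \<le> y) = y div x"
proof -
  have "(GREATEST m::nat. int m * x \<le> y) = nat (y div x)"
  proof (rule Greatest_equality)
    show "int (nat (y div x)) * x \<le> y" using assms
      by (simp add: pos_imp_zdiv_nonneg_iff mult.commute)
        (metis mult.commute mult_div_mod_eq le_add_same_cancel1 pos_mod_sign)
  next
    fix m :: nat assume "int m * x \<le> y"
    then have "int m \<le> y div x" using assms
      by (simp add: zdiv_mono1 [of "int m * x" y x, simplified])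
    then show "m \<le> nat (y div x)" by simp
  qed
  then show ?thesis using assms by (simp add: pos_imp_zdiv_nonneg_iff)
qed

definition pp :: "nat \<Rightarrow> nat \<Rightarrow> int" where
  "pp n k = (if z_k n k = 1 then int k else int n + 1 - int k)"
definition qq :: "nat \<Rightarrow> nat \<Rightarrow> int" where
  "qq n k = (if z_k n k = 1 then int n + 1 - int k else int k)"
definition Osm :: "nat \<Rightarrow> nat \<Rightarrow> nat \<Rightarrow> int" where
  "Osm n k l = (\<Sum>j\<le>l. if odd j then d_k n k j else 0)"
definition Esm :: "nat \<Rightarrow> nat \<Rightarrow> nat \<Rightarrow> int" where
  "Esm n k l = (\<Sum>j\<le>l. if even j then d_k n k j else 0)"

lemma SS_eq: "Osm n k l + Esm n k l = (\<Sum>j\<le>l. d_k n k j)"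
  unfolding Osm_def Esm_def sum.distrib[symmetric] by (rule sum.cong) auto

lemma Osm_Suc: "Osm n k (Suc l) = Osm n k l + (if odd (Suc l) then d_k n k (Suc l) else 0)"
  by (simp add: Osm_def)
lemma Esm_Suc: "Esm n k (Suc l) = Esm n k l + (if even (Suc l) then d_k n k (Suc l) else 0)"
  by (simp add: Esm_def)
lemma Osm0: "Osm n k 0 = 0" by (simp add: Osm_def)
lemma Esm0: "Esm n k 0 = 0" by (simp add: Esm_def d0)

lemma pq: assumes "1 \<le> k" "k \<le> n"
  shows "1 \<le> pp n k" "1 \<le> qq n k" "pp n k \<le> qq n k" "pp n k + qq n k = int n + 1"
  using assms by (auto simp: pp_def qq_def z_k_def)

lemma rec:
  assumes "1 \<le> k" "k \<le> n" "0 \<le> Osm n k l" "0 \<le> Esm n k l"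
  shows "d_k n k (Suc l) = min (int n - (Osm n k l + Esm n k l))
     (if even l then (Esm n k l + 1) * qq n k div pp n k - Osm n k l
      else (Osm n k l + 1) * pp n k div qq n k - Esm n k l)"
proof -
  define prev where "prev = map (d_k n k) [0..<Suc l]"
  have len: "length prev = Suc l" by (simp add: prev_def)
  have nth: "\<And>j. j \<le> l \<Longrightarrow> prev ! j = d_k n k j"
    by (simp add: prev_def nth_map_upt del: upt_Suc)
  have hO: "(\<Sum>j\<in>{j. 1 \<le> j \<and> j \<le> Suc l - 1 \<and> odd j}. prev ! j) = Osm n k l"
  proof -
    have "{j. 1 \<le> j \<and> j \<le> Suc l - 1 \<and> odd j} = {j \<in> {..l}. odd j}"
      by (auto simp: odd_pos Suc_leI)
    note seq = this
    have "(\<Sum>j\<in>{j. 1 \<le> j \<and> j \<le> Suc l - 1 \<and> odd j}. prev ! j)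
        = (\<Sum>j\<le>l. if odd j then prev ! j else 0)"
      unfolding seq by (rule sum.inter_filter) simp
    also have "\<dots> = Osm n k l" unfolding Osm_def by (rule sum.cong) (auto simp: nth)
    finally show ?thesis .
  qed
  have hE: "(\<Sum>j\<in>{j. j \<le> Suc l - 1 \<and> even j}. prev ! j) = Esm n k l"
  proof -
    have "{j. j \<le> Suc l - 1 \<and> even j} = {j \<in> {..l}. even j}"
      by auto
    note seq = this
    have "(\<Sum>j\<in>{j. j \<le> Suc l - 1 \<and> even j}. prev ! j)
        = (\<Sum>j\<le>l. if even j then prev ! j else 0)"
      unfolding seq by (rule sum.inter_filter) simp
    also have "\<dots> = Esm n k l" unfolding Esm_def by (rule sum.cong) (auto simp: nth)
    finally show ?thesis .
  qed
  have hS: "sum_list prev = Osm n k l + Esm n k l"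
    unfolding SS_eq prev_def by (simp add: sum_list_sum_nth atLeast0LessThan lessThan_Suc_atMost del: upt_Suc)
  have ka: "0 < int k" and kb: "0 < int n + 1 - int k" using assms by auto
  have e1: "0 \<le> Esm n k l + 1" and o1: "0 \<le> Osm n k l + 1" using assms by auto
  have "d_k n k (Suc l) = next_d n k prev" by (simp add: d_Suc prev_def)
  have g1: "\<And>x y. 0 \<le> x \<Longrightarrow> 0 < y \<Longrightarrow> 0 < z \<Longrightarrow>
     int (GREATEST m::nat. int m * z \<le> x * y) = x * y div z" for z :: int
    by (rule greatest_div) auto
  have "next_d n k prev = min (int n - (Osm n k l + Esm n k l))
     (if even l then (Esm n k l + 1) * qq n k div pp n k - Osm n k l
      else (Osm n k l + 1) * pp n k div qq n k - Esm n k l)"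
    unfolding next_d_def Let_def len hO hE hS
    using ka kb e1 o1 by (auto simp: g1 pp_def qq_def Osm0)
  then show ?thesis by (simp add: d_Suc prev_def)
qed
definition RR :: "nat \<Rightarrow> nat \<Rightarrow> nat \<Rightarrow> bool" where
  "RR n k l = ((\<forall>j. 1 \<le> j \<and> j \<le> l \<longrightarrow> d_k n k j \<ge> 1) \<and> 0 \<le> Osm n k l \<and> 0 \<le> Esm n k l
     \<and> Osm n k l + Esm n k l < int n \<and> Osm n k l \<le> qq n k - 1 \<and> Esm n k l \<le> pp n k - 1
     \<and> (even l \<longrightarrow> (Osm n k l + 1) * pp n k \<le> (Esm n k l + 1) * qq n k)
     \<and> (odd l \<longrightarrow> (Esm n k l + 1) * qq n k \<le> (Osm n k l + 1) * pp n k))"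

definition FF :: "nat \<Rightarrow> nat \<Rightarrow> nat \<Rightarrow> bool" where
  "FF n k l = ((\<forall>j. 1 \<le> j \<and> j \<le> l \<longrightarrow> d_k n k j \<ge> 1)
     \<and> Osm n k l + Esm n k l = int n
     \<and> (odd l \<longrightarrow> Osm n k l = qq n k) \<and> (even l \<longrightarrow> Esm n k l = pp n k))"

lemma l1: "(0::int) < p \<Longrightarrow> (Y + 1) * p \<le> Z \<Longrightarrow> Y + 1 \<le> Z div p"
  by (smt (verit, del_insts) div_mult_self1 zdiv_eq_0_iff zdiv_mono1)
lemma l3: "(0::int) < p \<Longrightarrow> Z < (Z div p + 1) * p"
proof -
  assume "0 < p"
  then have "Z mod p < p" by simp
  moreover have "Z div p * p + Z mod p = Z" by simp
  moreover have "(Z div p + 1)*p = Z div p * p + p" by (simp add: algebra_simps)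
  ultimately show ?thesis by linarith
qed
lemma l2: "(0::int) < p \<Longrightarrow> 0 < q \<Longrightarrow> X + 1 \<le> p \<Longrightarrow> (X + 1) * q div p \<le> q"
proof -
  assume a: "(0::int) < p" "0 < q" "X + 1 \<le> p"
  have "(X + 1) * q \<le> q * p" using a by (simp add: mult.commute mult_right_mono)
  then have "(X + 1) * q div p \<le> q * p div p" by (rule zdiv_mono1[OF _ a(1)])
  then show ?thesis using a by simp
qed
lemma l0: "(0::int) < p \<Longrightarrow> Z div p * p \<le> Z"
proof -
  assume "0 < p"
  then have "0 \<le> Z mod p" by simp
  moreover have "Z div p * p + Z mod p = Z" by simp
  ultimately show ?thesis by linarith
qed
lemma l4: "(0::int) < p \<Longrightarrow> 0 < q \<Longrightarrow> X + 1 \<le> p \<Longrightarrow> (X + 1) * q div p = q \<Longrightarrow> X = p - 1"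
proof -
  assume a: "(0::int) < p" "0 < q" "X + 1 \<le> p" "(X + 1) * q div p = q"
  have "q * p \<le> (X + 1) * q" using l0[OF a(1), of "(X+1)*q"] a(4) by simp
  then have "p * q \<le> (X + 1) * q" by (simp add: mult.commute)
  then have "p \<le> X + 1" using a(2) by simp
  then show ?thesis using a(3) by simp
qed

lemma step:
  assumes k1: "1 \<le> k" and kn: "k \<le> n" and R: "RR n k l"
  shows "(RR n k (Suc l) \<and> Osm n k l + Esm n k l < Osm n k (Suc l) + Esm n k (Suc l)) \<or> FF n k (Suc l)"
proof -
  define Ov where "Ov = Osm n k l"
  define Ev where "Ev = Esm n k l"
  define p where "p = pp n k"
  define q where "q = qq n k"
  define d where "d = d_k n k (Suc l)"
  have p1: "1 \<le> p" and q1: "1 \<le> q" and npq: "int n = p + q - 1"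
    using pq[OF k1 kn] by (auto simp: p_def q_def)
  have dall: "\<forall>j. 1 \<le> j \<and> j \<le> l \<longrightarrow> d_k n k j \<ge> 1" and O0: "0 \<le> Ov" and E0: "0 \<le> Ev"
    and S: "Ov + Ev < int n" and Oq: "Ov \<le> q - 1" and Ep: "Ev \<le> p - 1"
    and Iev: "even l \<Longrightarrow> (Ov + 1) * p \<le> (Ev + 1) * q"
    and Iod: "odd l \<Longrightarrow> (Ev + 1) * q \<le> (Ov + 1) * p"
    using R by (auto simp: RR_def Ov_def Ev_def p_def q_def)
  have drec: "d = min (int n - (Ov + Ev)) (if even l then (Ev + 1) * q div p - Ov else (Ov + 1) * p div q - Ev)"
    using rec[OF k1 kn] O0 E0 by (simp add: d_def Ov_def Ev_def p_def q_def)
  have dall': "d \<ge> 1 \<Longrightarrow> \<forall>j. 1 \<le> j \<and> j \<le> Suc l \<longrightarrow> d_k n k j \<ge> 1"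
    using dall by (auto simp: d_def le_Suc_eq)
  show ?thesis
  proof (cases "even l")
    case True
    define t where "t = (Ev + 1) * q div p"
    have t1: "Ov + 1 \<le> t" unfolding t_def using l1[of p Ov "(Ev+1)*q"] Iev[OF True] p1 by simp
    have t2: "t \<le> q" unfolding t_def using l2[of p q Ev] p1 q1 Ep by simp
    have t3: "(Ev + 1) * q < (t + 1) * p" unfolding t_def using l3[of p] p1 by simp
    have t4: "t = q \<Longrightarrow> Ev = p - 1" unfolding t_def using l4[of p q Ev] p1 q1 Ep by simp
    have dd: "d = min (int n - (Ov + Ev)) (t - Ov)" using drec True by (simp add: t_def)
    have O': "Osm n k (Suc l) = Ov + d" and E': "Esm n k (Suc l) = Ev"
      using True by (simp_all add: Osm_Suc Esm_Suc Ov_def Ev_def d_def)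
    have d1: "d \<ge> 1" using dd t1 S by simp
    show ?thesis
    proof (cases "t + Ev < int n")
      case True2: True
      have dt: "Ov + d = t" using dd True2 by simp
      have tq: "t \<le> q - 1" using t2 t4 True2 npq by fastforce
      then have "RR n k (Suc l)"
        unfolding RR_def O' E' using dall'[OF d1] True O0 E0 dt t1 tq t3 True2 npq Ep
        by (auto simp: p_def[symmetric] q_def[symmetric] algebra_simps)
      then show ?thesis using O' E' d1 by (simp add: Ov_def Ev_def)
    next
      case False
      have "FF n k (Suc l)"
        unfolding FF_def O' E' using dall'[OF d1] True dd False t2 npq Ep
        by (auto simp: p_def[symmetric] q_def[symmetric])
      then show ?thesis by simp
    qed
  next
    case False
    define t where "t = (Ov + 1) * p div q"
    have t1: "Ev + 1 \<le> t" unfolding t_def using l1[of q Ev "(Ov+1)*p"] Iod False q1 by simp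
    have t2: "t \<le> p" unfolding t_def using l2[of q p Ov] p1 q1 Oq by simp
    have t3: "(Ov + 1) * p < (t + 1) * q" unfolding t_def using l3[of q] q1 by simp
    have t4: "t = p \<Longrightarrow> Ov = q - 1" unfolding t_def using l4[of q p Ov] p1 q1 Oq by simp
    have dd: "d = min (int n - (Ov + Ev)) (t - Ev)" using drec False by (simp add: t_def)
    have O': "Osm n k (Suc l) = Ov" and E': "Esm n k (Suc l) = Ev + d"
      using False by (simp_all add: Osm_Suc Esm_Suc Ov_def Ev_def d_def)
    have d1: "d \<ge> 1" using dd t1 S by simp
    show ?thesis
    proof (cases "t + Ov < int n")
      case True2: True
      have dt: "Ev + d = t" using dd True2 by simp
      have tq: "t \<le> p - 1" using t2 t4 True2 npq by fastforce
      then have "RR n k (Suc l)"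
        unfolding RR_def O' E' using dall'[OF d1] False O0 E0 dt t1 tq t3 True2 npq Oq
        by (auto simp: p_def[symmetric] q_def[symmetric] algebra_simps)
      then show ?thesis using O' E' d1 by (simp add: Ov_def Ev_def)
    next
      case False2: False
      have "FF n k (Suc l)"
        unfolding FF_def O' E' using dall'[OF d1] False dd False2 t2 npq Oq
        by (auto simp: p_def[symmetric] q_def[symmetric])
      then show ?thesis by simp
    qed
  qed
qed


lemma RR0: assumes "1 \<le> k" "k \<le> n" "1 \<le> n" shows "RR n k 0"
  using pq[OF assms(1,2)] assms unfolding RR_def by (simp add: Osm0 Esm0)

lemma S_Suc: "Osm n k (Suc l) + Esm n k (Suc l) = Osm n k l + Esm n k l + d_k n k (Suc l)"
  by (simp add: Osm_Suc Esm_Suc)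

lemma exF: assumes "1 \<le> k" "k \<le> n" "1 \<le> n" shows "\<exists>r. FF n k r"
proof -
  have H: "(RR n k l \<and> int l \<le> Osm n k l + Esm n k l) \<or> (\<exists>r. FF n k r)" for l
  proof (induction l)
    case 0 then show ?case using RR0[OF assms] by (simp add: Osm0 Esm0)
  next
    case (Suc l)
    then show ?case using step[OF assms(1,2), of l] by force
  qed
  show ?thesis using H[of n] unfolding RR_def by auto
qed

lemma S_mono:
  assumes F: "FF n k r" and jm: "j \<le> m" and mr: "m \<le> r"
  shows "Osm n k j + Esm n k j + int (m - j) \<le> Osm n k m + Esm n k m"
  using jm mr
proof (induction m)
  case 0 then show ?case by simp
next
  case (Suc m)
  show ?case
  proof (cases "j = Suc m")
    case True then show ?thesis by simp
  next
    case False
    then have "j \<le> m" using Suc by simp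
    then have IH: "Osm n k j + Esm n k j + int (m - j) \<le> Osm n k m + Esm n k m" using Suc by simp
    have "d_k n k (Suc m) \<ge> 1" using F Suc(3) unfolding FF_def by auto
    then show ?thesis using IH S_Suc[of n k m] \<open>j \<le> m\<close> by (simp add: Suc_diff_le)
  qed
qed

lemma S_less: assumes F: "FF n k r" and "j < r" shows "Osm n k j + Esm n k j < int n"
  using S_mono[OF F, of j r] assms F unfolding FF_def by simp

lemma S_sum: "Osm n k l + Esm n k l = (\<Sum>j=1..l. d_k n k j)"
  by (induction l) (simp_all add: Osm0 Esm0 S_Suc)

lemma rk: assumes F: "FF n k r" shows "r_k n k = r"
  unfolding r_k_def
proof (rule Least_equality)
  show "(\<Sum>j = 1..r. d_k n k j) = int n" using F unfolding FF_def S_sum by simp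
next
  fix y assume "(\<Sum>j = 1..y. d_k n k j) = int n"
  then show "r \<le> y" using S_less[OF F, of y] unfolding S_sum[symmetric] by (cases "y < r") auto
qed


theorem proposition3p8:
  fixes n k :: nat
  assumes "1 \<le> n" and "1 \<le> k" and "k \<le> n"
  shows "vvec n (eta_k n k) = (0, k) \<or> vvec n (eta_k n k) = (n - k + 1, 0)"
proof -
  obtain r where F: "FF n k r" using exF[OF assms(2,3,1)] by blast
  define d where "d = d_k n k"
  define ds where "ds = map (\<lambda>i. nat (d i)) [0..<Suc r]"
  have eta: "eta_k n k = (z_k n k, ds)"
    unfolding eta_k_def rk[OF F] dseq_eq ds_def d_def by simp
  have dpos: "\<And>j. 1 \<le> j \<Longrightarrow> j \<le> r \<Longrightarrow> d j \<ge> 1" using F unfolding FF_def d_def by auto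
  have dnn: "\<And>j. j \<le> r \<Longrightarrow> d j \<ge> 0"
  proof -
    fix j :: nat assume "j \<le> r"
    then show "d j \<ge> 0" using dpos[of j] d0[of n k] unfolding d_def by (cases "j = 0") auto
  qed
  have dsn: "\<And>i. i < Suc r \<Longrightarrow> int (ds ! i) = d i"
    using dnn by (simp add: ds_def nth_map_upt del: upt_Suc)
  have r1: "1 \<le> r"
  proof (rule ccontr)
    assume "\<not> 1 \<le> r" then have "r = 0" by simp
    then show False using F assms(1) unfolding FF_def by (simp add: Osm0 Esm0)
  qed
  have Sr: "Osm n k r + Esm n k r = int n" using F unfolding FF_def by simp
  have ps: "int (psum ds t) = (\<Sum>i<t. d i)" if "t \<le> Suc r" for t
    unfolding psum_def of_nat_sum using that dsn by (intro sum.cong) auto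
  have ps2: "int (psum ds (Suc t)) = Osm n k t + Esm n k t" if "t \<le> r" for t
    using ps[of "Suc t"] that unfolding SS_eq d_def by (simp add: lessThan_Suc_atMost)
  have len: "length ds = Suc r" by (simp add: ds_def)
  have psr: "int (psum ds r) = Osm n k (r - 1) + Esm n k (r - 1)"
    using ps2[of "r - 1"] r1 by simp
  have psr_lt: "psum ds r < n" using psr S_less[OF F, of "r - 1"] r1 by simp
  have psr1: "psum ds (Suc r) = n" using ps2[of r] Sr by simp
  have the: "(THE t. t < length ds \<and> psum ds t < n \<and> n \<le> psum ds (Suc t)) = r"
  proof (rule the_equality)
    show "r < length ds \<and> psum ds r < n \<and> n \<le> psum ds (Suc r)" using len psr_lt psr1 by simp
  next
    fix t assume a: "t < length ds \<and> psum ds t < n \<and> n \<le> psum ds (Suc t)"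
    show "t = r"
    proof (rule ccontr)
      assume "t \<noteq> r" then have "t < r" using a len by simp
      then have "int (psum ds (Suc t)) < int n" using ps2[of t] S_less[OF F, of t] by simp
      then show False using a by simp
    qed
  qed
  define c where "c = n - psum ds r"
  have cint: "int c = d r"
  proof -
    have "Osm n k r + Esm n k r = Osm n k (r - 1) + Esm n k (r - 1) + d r"
      using S_Suc[of n k "r - 1"] r1 by (simp add: d_def)
    then show ?thesis using psr Sr psr_lt unfolding c_def by simp
  qed
  have osum: "int (odd_sum ds r) = Osm n k (r - 1)"
  proof -
    have seq: "{i. i < r \<and> odd i} = {i \<in> {..r - 1}. odd i}" using r1 by auto
    have "odd_sum ds r = (\<Sum>i\<le>r - 1. if odd i then ds ! i else 0)"
      unfolding odd_sum_def seq by (rule sum.inter_filter) simp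
    then have "int (odd_sum ds r) = (\<Sum>i\<le>r - 1. if odd i then int (ds ! i) else 0)"
      by (auto simp: of_nat_sum intro!: sum.cong)
    also have "\<dots> = Osm n k (r - 1)" unfolding Osm_def
      using dsn r1 by (intro sum.cong) (auto simp: d_def)
    finally show ?thesis .
  qed
  have esum: "int (even_sum ds r) = Esm n k (r - 1)"
  proof -
    have seq: "{i. i < r \<and> even i} = {i \<in> {..r - 1}. even i}" using r1 by auto
    have "even_sum ds r = (\<Sum>i\<le>r - 1. if even i then ds ! i else 0)"
      unfolding even_sum_def seq by (rule sum.inter_filter) simp
    then have "int (even_sum ds r) = (\<Sum>i\<le>r - 1. if even i then int (ds ! i) else 0)"
      by (auto simp: of_nat_sum intro!: sum.cong)
    also have "\<dots> = Esm n k (r - 1)" unfolding Esm_def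
      using dsn r1 by (intro sum.cong) (auto simp: d_def)
    finally show ?thesis .
  qed
  have oc: "odd r \<Longrightarrow> int (odd_sum ds r + c) = qq n k"
  proof -
    assume o: "odd r"
    have "Osm n k r = Osm n k (r - 1) + d r" using Osm_Suc[of n k "r - 1"] r1 o by (simp add: d_def)
    then show ?thesis using osum cint F o unfolding FF_def by simp
  qed
  have ec: "even r \<Longrightarrow> int (even_sum ds r + c) = pp n k"
  proof -
    assume o: "even r"
    have "Esm n k r = Esm n k (r - 1) + d r" using Esm_Suc[of n k "r - 1"] r1 o by (simp add: d_def)
    then show ?thesis using esum cint F o unfolding FF_def by simp
  qed
  have vv: "vvec n (eta_k n k) = (if z_k n k = 1 then
           (if odd r then (odd_sum ds r + c, 0) else (0, even_sum ds r + c))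
         else
           (if odd r then (0, odd_sum ds r + c) else (even_sum ds r + c, 0)))"
    unfolding eta vvec_def Let_def by (simp add: the c_def)
  show ?thesis
    using oc ec assms unfolding vv by (auto simp: pp_def qq_def z_k_def)
qed

end
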